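(* The integrality gap of the following odd path blocker LP for \textsc{$\{s,t\}$-OddPathEdgeBlocker} in undirected graphs is at least $2$: $$\min\Big\{\sum_{e\in E}c(e)x_e : \sum_{e\in P}x_e\ge 1 \text{ for every odd-length } s\text{-}t \text{ path } P \text{ in } G,\ x_e\ge 0\ \forall e\in E(G)\Big\}.$$ More precisely, for every $\varepsilon>0$ there is an undirected (multi)graph $G$ with distinct nodes $s,t$ and unit costs $c\equiv1$ for which the minimum size of an edge set meeting all odd $s$-$t$ paths is at least $(2-\varepsilon)$ times the LP optimum.
   Context: Paths are simple paths; odd-length means an odd number of edges. \textsc{$\{s,t\}$-OddPathEdgeBlocker}: given an undirected graph $G$ with distinct nodes $s,t$ and edge costs, find a minimum-cost set of edges meeting every odd $s$-$t$ path. *)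

theory Defs
  imports Main "HOL-Library.Multiset" Complex_Main
begin

text \<open>Parallel edges are distinct identifiers with the same endpoints.\<close>

definition multigraph :: "'v set \<Rightarrow> 'e set \<Rightarrow> ('e \<Rightarrow> 'v set) \<Rightarrow> bool" where
  "multigraph V E ends \<longleftrightarrow> finite V \<and> finite E \<and>
     (\<forall>e\<in>E. ends e \<subseteq> V \<and> card (ends e) = 2)"

definition st_path :: "'e set \<Rightarrow> ('e \<Rightarrow> 'v set) \<Rightarrow> 'v \<Rightarrow> 'v \<Rightarrow> 'v list \<Rightarrow> 'e list \<Rightarrow> bool" where
  "st_path E ends s t vs es \<longleftrightarrow>
     length vs = Suc (length es) \<and> hd vs = s \<and> last vs = t \<and> distinct vs \<and>
     set es \<subseteq> E \<and> (\<forall>i<length es. ends (es ! i) = {vs ! i, vs ! Suc i})"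

definition odd_st_path :: "'e set \<Rightarrow> ('e \<Rightarrow> 'v set) \<Rightarrow> 'v \<Rightarrow> 'v \<Rightarrow> 'v list \<Rightarrow> 'e list \<Rightarrow> bool" where
  "odd_st_path E ends s t vs es \<longleftrightarrow> st_path E ends s t vs es \<and> odd (length es)"

definition odd_path_blocker :: "'e set \<Rightarrow> ('e \<Rightarrow> 'v set) \<Rightarrow> 'v \<Rightarrow> 'v \<Rightarrow> 'e set \<Rightarrow> bool" where
  "odd_path_blocker E ends s t F \<longleftrightarrow> F \<subseteq> E \<and>
     (\<forall>vs es. odd_st_path E ends s t vs es \<longrightarrow> set es \<inter> F \<noteq> {})"

definition lp_feasible :: "'e set \<Rightarrow> ('e \<Rightarrow> 'v set) \<Rightarrow> 'v \<Rightarrow> 'v \<Rightarrow> ('e \<Rightarrow> real) \<Rightarrow> bool" where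
  "lp_feasible E ends s t x \<longleftrightarrow> (\<forall>e\<in>E. x e \<ge> 0) \<and>
     (\<forall>vs es. odd_st_path E ends s t vs es \<longrightarrow> (\<Sum>e\<in>set es. x e) \<ge> 1)"

definition lp_opt :: "'e set \<Rightarrow> ('e \<Rightarrow> 'v set) \<Rightarrow> 'v \<Rightarrow> 'v \<Rightarrow> ('e \<Rightarrow> real) \<Rightarrow> real" where
  "lp_opt E ends s t c = Inf {(\<Sum>e\<in>E. c e * x e) | x. lp_feasible E ends s t x}"

definition int_opt :: "'e set \<Rightarrow> ('e \<Rightarrow> 'v set) \<Rightarrow> 'v \<Rightarrow> 'v \<Rightarrow> ('e \<Rightarrow> real) \<Rightarrow> real" where
  "int_opt E ends s t c = Inf {(\<Sum>e\<in>F. c e) | F. odd_path_blocker E ends s t F}"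

end

theory Submission
  imports Defs "HOL-Library.Countable"
begin

type_synonym lab = "nat \<times> nat \<times> nat \<times> nat"

definition LL :: "nat \<Rightarrow> lab set" where
  "LL n = {(a,i,j,k). a \<le> 3 \<and> i < n \<and> j < n \<and> k < n \<and> (a = 0 \<longrightarrow> j = 0 \<and> k = 0) \<and> (a = 3 \<longrightarrow> i \<noteq> j)}"

fun lends :: "lab \<Rightarrow> nat set" where
  "lends (a,i,j,k) = (if a = 0 then {2*i+2, 2*i+3} else if a = 1 then {0, 2*i+2}
     else if a = 2 then {1, 2*i+2} else {2*i+3, 2*j+3})"

definition EE :: "nat \<Rightarrow> nat set" where "EE n = to_nat ` LL n"
definition EN :: "nat \<Rightarrow> nat set" where "EN e = lends (from_nat e)"
definition SS :: "nat \<Rightarrow> nat set" where "SS n = (\<lambda>i. to_nat (0::nat, i, 0::nat, 0::nat)) ` {..<n}"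
definition WW :: "nat set" where "WW = {w. odd w \<and> w \<ge> 3}"

lemma LL_finite: "finite (LL n)"
proof -
  have "LL n \<subseteq> {..3} \<times> {..<n} \<times> {..<n} \<times> {..<n}" unfolding LL_def by auto
  thus ?thesis by (rule finite_subset) auto
qed

lemma edge_A:
  assumes "l \<in> LL n" "lends l = {x,y}" "x \<notin> WW" "y \<in> WW"
  shows "\<exists>i<n. l = (0,i,0,0)"
proof -
  obtain a i j k where l: "l = (a,i,j,k)" by (cases l) auto
  show ?thesis using assms unfolding l LL_def WW_def
    by (auto simp: doubleton_eq_iff split: if_splits)
qed

lemma edge_s:
  assumes "l \<in> LL n" "lends l = {0,y}"
  shows "\<exists>i<n. y = 2*i+2"
proof -
  obtain a i j k where l: "l = (a,i,j,k)" by (cases l) auto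
  show ?thesis using assms unfolding l LL_def
    by (auto simp: doubleton_eq_iff split: if_splits)
qed

lemma edge_u:
  assumes "l \<in> LL n" "lends l = {2*i+2,y}" "y \<notin> WW"
  shows "y = 0 \<or> y = 1"
proof -
  obtain a i' j k where l: "l = (a,i',j,k)" by (cases l) auto
  show ?thesis using assms unfolding l LL_def WW_def
    by (auto simp: doubleton_eq_iff split: if_splits)
qed

lemma EN_E: "e \<in> EE n \<Longrightarrow> \<exists>l\<in>LL n. e = to_nat l \<and> EN e = lends l"
  unfolding EE_def EN_def by auto

lemma trans_pt: "P (f a) \<Longrightarrow> \<not> P (f b) \<Longrightarrow> a \<le> b \<Longrightarrow> \<exists>q. a \<le> q \<and> q < b \<and> P (f q) \<and> \<not> P (f (Suc q))"
proof (induction b)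
  case 0 then show ?case by auto
next
  case (Suc b)
  show ?case
  proof (cases "P (f b)")
    case True then show ?thesis using Suc by (metis le_Suc_eq lessI)
  next
    case False
    then have "a \<le> b" using Suc by (metis le_SucE)
    then show ?thesis using Suc.IH[OF Suc.prems(1) False] by (meson less_SucI)
  qed
qed

lemma special_edge:
  assumes "e \<in> EE n" "EN e = {x,y}" "x \<notin> WW" "y \<in> WW"
  shows "e \<in> SS n"
proof -
  obtain l where l: "l \<in> LL n" "e = to_nat l" "EN e = lends l" using EN_E[OF assms(1)] by blast
  obtain i where "i<n" "l = (0,i,0,0)" using edge_A[OF l(1) _ assms(3,4)] l(3) assms(2) by metis
  thus ?thesis using l(2) unfolding SS_def by auto
qed

lemma path_two_specials:
  assumes "odd_st_path (EE n) EN 0 1 vs es"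
  shows "\<exists>p<length es. \<exists>q<length es. es!p \<noteq> es!q \<and> es!p \<in> SS n \<and> es!q \<in> SS n"
proof -
  have len: "length vs = Suc (length es)" and hd: "hd vs = 0" and lst: "last vs = 1"
    and dist: "distinct vs" and sub: "set es \<subseteq> EE n"
    and ends: "\<And>i. i < length es \<Longrightarrow> EN (es ! i) = {vs ! i, vs ! Suc i}"
    and odd: "odd (length es)"
    using assms unfolding odd_st_path_def st_path_def by auto
  have ne: "vs \<noteq> []" using len by auto
  have v0: "vs ! 0 = 0" using hd ne by (simp add: hd_conv_nth)
  have vl: "vs ! length es = 1" using lst ne len by (simp add: last_conv_nth)
  have esi: "\<And>i. i < length es \<Longrightarrow> es ! i \<in> EE n" using sub by auto
  have pos: "length es \<ge> 1" using odd by (cases "length es") auto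
  show ?thesis
  proof (cases "\<exists>k\<le>length es. vs ! k \<in> WW")
    case True
    then obtain k where k: "k \<le> length es" "vs ! k \<in> WW" by blast
    have "0 \<notin> WW" "1 \<notin> WW" unfolding WW_def by auto
    obtain p where p: "p < k" "vs ! p \<notin> WW" "vs ! Suc p \<in> WW"
      using trans_pt[of "\<lambda>w. w \<notin> WW" "\<lambda>i. vs ! i" 0 k] k v0 \<open>0 \<notin> WW\<close> by auto
    obtain q where q: "k \<le> q" "q < length es" "vs ! q \<in> WW" "vs ! Suc q \<notin> WW"
      using trans_pt[of "\<lambda>w. w \<in> WW" "\<lambda>i. vs ! i" k "length es"] k vl \<open>1 \<notin> WW\<close> by auto
    have pl: "p < length es" using p k by auto
    have sp: "es ! p \<in> SS n" using special_edge[OF esi[OF pl] ends[OF pl] p(2,3)] .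
    have sq: "es ! q \<in> SS n" using special_edge[OF esi[OF q(2)], of "vs ! Suc q" "vs ! q"] ends[OF q(2)] q(3,4)
      by (simp add: insert_commute)
    have "es ! p \<noteq> es ! q"
    proof
      assume "es ! p = es ! q"
      then have eq: "{vs ! p, vs ! Suc p} = {vs ! q, vs ! Suc q}" using ends pl q(2) by metis
      have "p \<noteq> q" using p q by auto
      have ilt: "p < length vs" "Suc p < length vs" "q < length vs" "Suc q < length vs"
        using pl q len by auto
      have "vs ! p = vs ! Suc q"
        using eq \<open>p \<noteq> q\<close> nth_eq_iff_index_eq[OF dist ilt(1) ilt(3)] by (auto simp: doubleton_eq_iff)
      then have "p = Suc q" using nth_eq_iff_index_eq[OF dist ilt(1) ilt(4)] by simp
      then show False using p q by auto
    qed
    then show ?thesis using sp sq pl q(2) by blast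
  next
    case False
    have e0: "EN (es ! 0) = {0, vs ! 1}" using ends[of 0] pos v0 by (simp add: Suc_le_eq)
    obtain l0 where l0: "l0 \<in> LL n" "EN (es!0) = lends l0" using EN_E[OF esi[of 0]] pos by (meson less_le_trans zero_less_one)
    obtain i where i: "vs ! 1 = 2*i+2" using edge_s[OF l0(1)] l0(2) e0 by metis
    have "length es \<noteq> 1" using vl i by auto
    then have l2: "length es \<ge> 2" using pos by auto
    have e1: "EN (es ! 1) = {2*i+2, vs ! 2}" using ends[of 1] l2 i by (simp add: numeral_2_eq_2)
    obtain l1 where l1: "l1 \<in> LL n" "EN (es!1) = lends l1" using EN_E[OF esi[of 1]] l2 by (meson less_le_trans one_less_numeral_iff semiring_norm(76))
    have "vs ! 2 \<notin> WW" using False l2 by auto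
    then have "vs ! 2 = 0 \<or> vs ! 2 = 1" using edge_u[OF l1(1), of i "vs ! 2"] l1(2) e1 by metis
    moreover have "vs ! 2 \<noteq> vs ! 0" using nth_eq_iff_index_eq[OF dist, of 2 0] len l2 by auto
    ultimately have "vs ! 2 = vs ! length es" using v0 vl by auto
    then have "length es = 2" using nth_eq_iff_index_eq[OF dist, of 2 "length es"] len l2 by auto
    then show ?thesis using odd by auto
  qed
qed

lemma explicit_path:
  assumes "i<n" "j<n" "i\<noteq>j" "k1<n" "k2<n" "k3<n"
  shows "odd_st_path (EE n) EN 0 1 [0, 2*i+2, 2*i+3, 2*j+3, 2*j+2, 1]
     [to_nat (1::nat,i,0::nat,k1), to_nat (0::nat,i,0::nat,0::nat), to_nat (3::nat,i,j,k3),
      to_nat (0::nat,j,0::nat,0::nat), to_nat (2::nat,j,0::nat,k2)]"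
proof -
  have n0: "0 < n" using assms by auto
  have sub: "set [to_nat (1::nat,i,0::nat,k1), to_nat (0::nat,i,0::nat,0::nat), to_nat (3::nat,i,j,k3),
      to_nat (0::nat,j,0::nat,0::nat), to_nat (2::nat,j,0::nat,k2)] \<subseteq> EE n"
    using assms n0 unfolding EE_def LL_def by auto
  have d: "distinct [0, 2*i+2, 2*i+3, 2*j+3, 2*j+2, (1::nat)]" using assms by auto
  have e: "\<forall>m<5. EN ([to_nat (1::nat,i,0::nat,k1), to_nat (0::nat,i,0::nat,0::nat), to_nat (3::nat,i,j,k3),
      to_nat (0::nat,j,0::nat,0::nat), to_nat (2::nat,j,0::nat,k2)] ! m) =
      {[0, 2*i+2, 2*i+3, 2*j+3, 2*j+2, 1] ! m, [0, 2*i+2, 2*i+3, 2*j+3, 2*j+2, 1] ! Suc m}"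
    by (auto simp: EN_def less_Suc_eq numeral_eq_Suc insert_commute)
  show ?thesis unfolding odd_st_path_def st_path_def using sub d e by simp
qed

lemma avoid: "finite F \<Longrightarrow> card F < n \<Longrightarrow> inj_on f {..<n} \<Longrightarrow> \<exists>k<n. f k \<notin> F"
proof (rule ccontr)
  assume a: "finite F" "card F < n" "inj_on f {..<n}" "\<not> (\<exists>k<n. f k \<notin> F)"
  then have "f ` {..<n} \<subseteq> F" by auto
  then have "card (f ` {..<n}) \<le> card F" using a(1) card_mono by blast
  then show False using a card_image[OF a(3)] by simp
qed

lemma int_bound:
  assumes "odd_path_blocker (EE n) EN 0 1 F"
  shows "card F \<ge> n - 1"
proof (rule ccontr)
  assume c: "\<not> card F \<ge> n - 1"
  have fin: "finite F" using assms LL_finite unfolding odd_path_blocker_def EE_def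
    by (meson finite_imageI finite_subset)
  have cF: "card F < n" using c by auto
  obtain i where i: "i<n" "to_nat (0::nat,i,0::nat,0::nat) \<notin> F"
    using avoid[OF fin cF, of "\<lambda>i. to_nat (0::nat,i,0::nat,0::nat)"] by (auto simp: inj_on_def)
  have cF2: "card (insert (to_nat (0::nat,i,0::nat,0::nat)) F) < n" using c fin i by auto
  obtain j where j: "j<n" "to_nat (0::nat,j,0::nat,0::nat) \<notin> insert (to_nat (0::nat,i,0::nat,0::nat)) F"
    using avoid[OF _ cF2, of "\<lambda>i. to_nat (0::nat,i,0::nat,0::nat)"] fin by (auto simp: inj_on_def)
  have ij: "i \<noteq> j" using j by auto
  obtain k1 where k1: "k1<n" "to_nat (1::nat,i,0::nat,k1) \<notin> F"
    using avoid[OF fin cF, of "\<lambda>k. to_nat (1::nat,i,0::nat,k)"] by (auto simp: inj_on_def)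
  obtain k2 where k2: "k2<n" "to_nat (2::nat,j,0::nat,k2) \<notin> F"
    using avoid[OF fin cF, of "\<lambda>k. to_nat (2::nat,j,0::nat,k)"] by (auto simp: inj_on_def)
  obtain k3 where k3: "k3<n" "to_nat (3::nat,i,j,k3) \<notin> F"
    using avoid[OF fin cF, of "\<lambda>k. to_nat (3::nat,i,j,k)"] by (auto simp: inj_on_def)
  have "odd_st_path (EE n) EN 0 1 [0, 2*i+2, 2*i+3, 2*j+3, 2*j+2, 1]
     [to_nat (1::nat,i,0::nat,k1), to_nat (0::nat,i,0::nat,0::nat), to_nat (3::nat,i,j,k3),
      to_nat (0::nat,j,0::nat,0::nat), to_nat (2::nat,j,0::nat,k2)]" (is "odd_st_path _ _ _ _ ?vs ?es")
    using explicit_path[OF i(1) j(1) ij k1(1) k2(1) k3(1)] .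
  then have "set ?es \<inter> F \<noteq> {}" using assms unfolding odd_path_blocker_def by blast
  then show False using i j k1 k2 k3 by auto
qed

definition x0 :: "nat \<Rightarrow> nat \<Rightarrow> real" where "x0 n e = (if e \<in> SS n then 1/2 else 0)"

lemma SS_sub: "SS n \<subseteq> EE n" unfolding SS_def EE_def LL_def by auto

lemma card_SS: "card (SS n) = n"
  unfolding SS_def by (subst card_image) (auto simp: inj_on_def)

lemma x0_feas: "lp_feasible (EE n) EN 0 1 (x0 n)"
  unfolding lp_feasible_def
proof (intro conjI allI impI)
  show "\<forall>e\<in>EE n. 0 \<le> x0 n e" unfolding x0_def by auto
next
  fix vs es assume a: "odd_st_path (EE n) EN 0 1 vs es"
  obtain p q where pq: "p<length es" "q<length es" "es!p \<noteq> es!q" "es!p \<in> SS n" "es!q \<in> SS n"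
    using path_two_specials[OF a] by blast
  have "(\<Sum>e\<in>{es!p, es!q}. x0 n e) = 1" using pq unfolding x0_def by simp
  moreover have "(\<Sum>e\<in>{es!p, es!q}. x0 n e) \<le> (\<Sum>e\<in>set es. x0 n e)"
    by (rule sum_mono2) (use pq in \<open>auto simp: x0_def\<close>)
  ultimately show "1 \<le> (\<Sum>e\<in>set es. x0 n e)" by linarith
qed

lemma x0_val: "(\<Sum>e\<in>EE n. 1 * x0 n e) = real n / 2"
proof -
  have "(\<Sum>e\<in>EE n. 1 * x0 n e) = (\<Sum>e\<in>EE n \<inter> SS n. (1/2::real))"
    unfolding x0_def by (simp add: sum.inter_restrict[symmetric] LL_finite EE_def)
  also have "EE n \<inter> SS n = SS n" using SS_sub by auto
  finally show ?thesis by (simp add: card_SS)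
qed

lemma lp_ge1:
  assumes "n \<ge> 2" "lp_feasible (EE n) EN 0 1 x"
  shows "(\<Sum>e\<in>EE n. 1 * x e) \<ge> 1"
proof -
  have "odd_st_path (EE n) EN 0 1 [0, 2*0+2, 2*0+3, 2*1+3, 2*1+2, 1]
     [to_nat (1::nat,0::nat,0::nat,0::nat), to_nat (0::nat,0::nat,0::nat,0::nat), to_nat (3::nat,0::nat,1::nat,0::nat),
      to_nat (0::nat,1::nat,0::nat,0::nat), to_nat (2::nat,1::nat,0::nat,0::nat)]" (is "odd_st_path _ _ _ _ ?vs ?es")
    by (rule explicit_path) (use assms in auto)
  then have p: "odd_st_path (EE n) EN 0 1 ?vs ?es" by simp
  have 1: "1 \<le> (\<Sum>e\<in>set ?es. x e)" using assms(2) p unfolding lp_feasible_def by blast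
  have sub: "set ?es \<subseteq> EE n" using p unfolding odd_st_path_def st_path_def by blast
  have "(\<Sum>e\<in>set ?es. x e) \<le> (\<Sum>e\<in>EE n. x e)"
    by (rule sum_mono2) (use sub assms(2) LL_finite in \<open>auto simp: EE_def lp_feasible_def\<close>)
  then show ?thesis using 1 by simp
qed

lemma multi: "multigraph {..2*n+2} (EE n) EN"
  unfolding multigraph_def
proof (intro conjI ballI)
  show "finite (EE n)" using LL_finite EE_def by simp
next
  fix e assume "e \<in> EE n"
  then obtain l where l: "l \<in> LL n" "EN e = lends l" using EN_E by blast
  obtain a i j k where ll: "l = (a,i,j,k)" by (cases l) auto
  show "EN e \<subseteq> {..2*n+2}" using l unfolding ll LL_def by auto
  show "card (EN e) = 2" using l unfolding ll LL_def by auto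
qed simp

theorem lemma4p1:
  fixes \<epsilon> :: real
  assumes "\<epsilon> > 0"
  shows "\<exists>(V :: nat set) (E :: nat set) (ends :: nat \<Rightarrow> nat set) s t.
           multigraph V E ends \<and> s \<in> V \<and> t \<in> V \<and> s \<noteq> t \<and>
           lp_opt E ends s t (\<lambda>_. 1) > 0 \<and>
           int_opt E ends s t (\<lambda>_. 1) \<ge> (2 - \<epsilon>) * lp_opt E ends s t (\<lambda>_. 1)"
proof -
  define n where "n = nat \<lceil>2/\<epsilon>\<rceil> + 3"
  have n2: "n \<ge> 2" unfolding n_def by auto
  have nb: "real n \<ge> 2/\<epsilon>"
  proof -
    have "2/\<epsilon> \<le> real (nat \<lceil>2/\<epsilon>\<rceil>)" by (rule real_nat_ceiling_ge)
    then show ?thesis unfolding n_def by simp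
  qed
  let ?S = "{(\<Sum>e\<in>EE n. 1 * x e) | x. lp_feasible (EE n) EN 0 1 x}"
  have Sne: "?S \<noteq> {}" using x0_feas by blast
  have Slb: "\<And>z. z \<in> ?S \<Longrightarrow> z \<ge> 1" using lp_ge1[OF n2] by blast
  have lp1: "lp_opt (EE n) EN 0 1 (\<lambda>_. 1) \<ge> 1"
    unfolding lp_opt_def by (rule cInf_greatest[OF Sne]) (use Slb in auto)
  have lp2: "lp_opt (EE n) EN 0 1 (\<lambda>_. 1) \<le> real n / 2"
    unfolding lp_opt_def
  proof (rule cInf_lower)
    have "real n / 2 = (\<Sum>e\<in>EE n. 1 * x0 n e)" using x0_val by simp
    then show "real n / 2 \<in> ?S" using x0_feas[of n] by blast
    show "bdd_below ?S" using Slb by (meson bdd_belowI)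
  qed
  let ?T = "{(\<Sum>e\<in>F. (1::real)) | F. odd_path_blocker (EE n) EN 0 1 F}"
  have Tne: "?T \<noteq> {}"
  proof -
    have "odd_path_blocker (EE n) EN 0 1 (EE n)"
      unfolding odd_path_blocker_def odd_st_path_def st_path_def
    proof (intro conjI allI impI)
      fix vs and es :: "nat list"
      assume a: "(length vs = Suc (length es) \<and> hd vs = 0 \<and> last vs = 1 \<and> distinct vs \<and> set es \<subseteq> EE n \<and>
         (\<forall>i<length es. EN (es ! i) = {vs ! i, vs ! Suc i})) \<and> odd (length es)"
      then have "es \<noteq> []" by auto
      then have "hd es \<in> set es" by simp
      then show "set es \<inter> EE n \<noteq> {}" using a by blast
    qed simp
    then show ?thesis by blast
  qed
  have io: "int_opt (EE n) EN 0 1 (\<lambda>_. 1) \<ge> real n - 1"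
    unfolding int_opt_def
  proof (rule cInf_greatest[OF Tne])
    fix z assume "z \<in> ?T"
    then obtain F where F: "odd_path_blocker (EE n) EN 0 1 F" "z = (\<Sum>e\<in>F. (1::real))" by blast
    have "card F \<ge> n - 1" using int_bound[OF F(1)] .
    then show "real n - 1 \<le> z" using F(2) n2 by simp
  qed
  have fin: "(2 - \<epsilon>) * lp_opt (EE n) EN 0 1 (\<lambda>_. 1) \<le> int_opt (EE n) EN 0 1 (\<lambda>_. 1)"
  proof (cases "\<epsilon> \<ge> 2")
    case True
    then have "(2 - \<epsilon>) * lp_opt (EE n) EN 0 1 (\<lambda>_. 1) \<le> 0" using lp1
      by (simp add: mult_nonpos_nonneg)
    then show ?thesis using io n2 by linarith
  next
    case False
    then have "(2 - \<epsilon>) * lp_opt (EE n) EN 0 1 (\<lambda>_. 1) \<le> (2 - \<epsilon>) * (real n / 2)"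
      using lp2 by (intro mult_left_mono) auto
    also have "\<dots> = real n - \<epsilon> * real n / 2" by (simp add: field_simps)
    also have "\<dots> \<le> real n - 1"
    proof -
      have "\<epsilon> * real n \<ge> \<epsilon> * (2/\<epsilon>)" using nb assms by (intro mult_left_mono) auto
      then show ?thesis using assms by simp
    qed
    finally show ?thesis using io by linarith
  qed
  show ?thesis
    apply (rule exI[of _ "{..2*n+2}"], rule exI[of _ "EE n"], rule exI[of _ EN], rule exI[of _ 0], rule exI[of _ 1])
    using multi fin lp1 by auto
qed

end
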